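(* There is an absolute constant $C>0$ such that the following holds. Fix $d,k\in\mathbb N$. Let $A=gg^\top$ where $g\in\mathbb R^{d^k}$ has iid standard normal entries, and let $x=x_1\otimes\cdots\otimes x_k$ with $x_1,\dots,x_k\in\mathbb R^d$ independent of each other and of $g$, each being a Rademacher vector or a $\mathcal N(0,I_d)$ vector. Then (i) with probability at least $3/4$ over $g$, $\operatorname{Var}[x^\top Ax\mid g]\le C(2+\tfrac1d)^k(\operatorname{tr}(A))^2$; and (ii) for every $\varepsilon\in(0,1)$ and every $\ell\ge C\,\varepsilon^{-2}(2+\tfrac1d)^k$, with probability at least $2/3$ (over $g$ and the query vectors), the Kronecker–Hutchinson estimator satisfies $(1-\varepsilon)\operatorname{tr}(A)\le H_\ell(A)\le(1+\varepsilon)\operatorname{tr}(A)$.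
   Context: A Rademacher vector has iid entries uniform on $\{\pm1\}$. The Kronecker–Hutchinson estimator with $\ell$ samples is $H_\ell(A)=\frac1\ell\sum_{j=1}^\ell (x^{(j)})^\top A x^{(j)}$, where $x^{(1)},\dots,x^{(\ell)}$ are iid copies of $x=x_1\otimes\cdots\otimes x_k$ (independent of $g$). *)

theory Defs
  imports "HOL-Probability.Probability"
begin

definition rademacher :: "real measure" where
  "rademacher = distr (measure_pmf (pmf_of_set {-1, 1::real})) borel (\<lambda>t. t)"

definition std_gaussian :: "real measure" where
  "std_gaussian = density lborel std_normal_density"

definition entry_dist :: "bool \<Rightarrow> real measure" where
  "entry_dist r = (if r then rademacher else std_gaussian)"

text \<open>The k independent factor vectors x_1..x_k in R^d, as X j i (j<k, i<d).\<close>
definition query_dist :: "nat \<Rightarrow> nat \<Rightarrow> (nat \<Rightarrow> bool) \<Rightarrow> (nat \<Rightarrow> nat \<Rightarrow> real) measure" where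
  "query_dist d k rad = PiM {..<k} (\<lambda>j. PiM {..<d} (\<lambda>_. entry_dist (rad j)))"

text \<open>Index set of R^(d^k): multi-indices (i_1,...,i_k) with i_j < d.\<close>
definition kron_index :: "nat \<Rightarrow> nat \<Rightarrow> (nat \<Rightarrow> nat) set" where
  "kron_index d k = {..<k} \<rightarrow>\<^sub>E {..<d}"

definition gauss_vec :: "nat \<Rightarrow> nat \<Rightarrow> ((nat \<Rightarrow> nat) \<Rightarrow> real) measure" where
  "gauss_vec d k = PiM (kron_index d k) (\<lambda>_. std_gaussian)"

definition kron_vec :: "nat \<Rightarrow> (nat \<Rightarrow> nat \<Rightarrow> real) \<Rightarrow> (nat \<Rightarrow> nat) \<Rightarrow> real" where
  "kron_vec k X i = (\<Prod>j<k. X j (i j))"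

definition matA :: "((nat \<Rightarrow> nat) \<Rightarrow> real) \<Rightarrow> (nat \<Rightarrow> nat) \<Rightarrow> (nat \<Rightarrow> nat) \<Rightarrow> real" where
  "matA g i i' = g i * g i'"

definition traceA :: "nat \<Rightarrow> nat \<Rightarrow> ((nat \<Rightarrow> nat) \<Rightarrow> real) \<Rightarrow> real" where
  "traceA d k g = (\<Sum>i\<in>kron_index d k. matA g i i)"

definition quad_form :: "nat \<Rightarrow> nat \<Rightarrow> ((nat \<Rightarrow> nat) \<Rightarrow> real) \<Rightarrow> (nat \<Rightarrow> nat \<Rightarrow> real) \<Rightarrow> real" where
  "quad_form d k g X =
     (\<Sum>i\<in>kron_index d k. \<Sum>i'\<in>kron_index d k. kron_vec k X i * matA g i i' * kron_vec k X i')"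

definition var_of :: "'a measure \<Rightarrow> ('a \<Rightarrow> real) \<Rightarrow> real" where
  "var_of M f = (\<integral>x. (f x - (\<integral>y. f y \<partial>M))\<^sup>2 \<partial>M)"

definition hutch :: "nat \<Rightarrow> nat \<Rightarrow> nat \<Rightarrow> ((nat \<Rightarrow> nat) \<Rightarrow> real) \<Rightarrow> (nat \<Rightarrow> nat \<Rightarrow> nat \<Rightarrow> real) \<Rightarrow> real" where
  "hutch d k l g Xs = (1 / real l) * (\<Sum>s<l. quad_form d k g (Xs s))"

end

theory Submission
  imports Defs
begin

lemma rad_space[simp]: "space rademacher = UNIV" and rad_sets[simp,measurable_cong]: "sets rademacher = sets borel"
  by (simp_all add: rademacher_def)

lemma gau_space[simp]: "space std_gaussian = UNIV" and gau_sets[simp,measurable_cong]: "sets std_gaussian = sets borel"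
  by (simp_all add: std_gaussian_def)

lemma ed_space[simp]: "space (entry_dist r) = UNIV" and ed_sets[simp,measurable_cong]: "sets (entry_dist r) = sets borel"
  by (simp_all add: entry_dist_def)

lemma prob_rad: "prob_space rademacher"
  unfolding rademacher_def by (rule prob_space.prob_space_distr) (auto simp: measure_pmf.prob_space_axioms)

lemma prob_gau: "prob_space std_gaussian"
  unfolding std_gaussian_def using real_dist_normal_dist by (simp add: real_distribution_def)

lemma prob_ed: "prob_space (entry_dist r)"
  by (simp add: entry_dist_def prob_rad prob_gau)

lemma rad_nn: "(\<integral>\<^sup>+x. f x \<partial>rademacher) = (f (-1) + f 1) / 2"
  if [measurable]: "f \<in> borel_measurable borel"
proof -
  have "(\<integral>\<^sup>+x. f x \<partial>rademacher) = (\<integral>\<^sup>+x. f x \<partial>measure_pmf (pmf_of_set {-1, 1::real}))"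
    unfolding rademacher_def by (simp add: nn_integral_distr)
  also have "\<dots> = (f (-1) + f 1) / 2"
    by (subst nn_integral_pmf_of_set) auto
  finally show ?thesis .
qed

lemma rad_int: "(\<integral>x. f x \<partial>rademacher) = (f (-1) + f 1) / 2"
    and rad_integrable: "integrable rademacher (f::real\<Rightarrow>real)"
  if [measurable]: "f \<in> borel_measurable borel"
proof -
  show "(\<integral>x. f x \<partial>rademacher) = (f (-1) + f 1) / 2"
    unfolding rademacher_def by (simp add: integral_distr integral_pmf_of_set)
  show "integrable rademacher f"
    unfolding rademacher_def
    by (subst integrable_distr_eq) (auto intro!: integrable_measure_pmf_finite)
qed

lemma gau_nn: "f \<in> borel_measurable borel \<Longrightarrow> (\<integral>\<^sup>+x. f x \<partial>std_gaussian) = (\<integral>\<^sup>+x. ennreal (std_normal_density x) * f x \<partial>lborel)"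
  unfolding std_gaussian_def by (subst nn_integral_density) auto

lemma gau_moment_integrable: "integrable std_gaussian (\<lambda>x. x ^ n)"
  unfolding std_gaussian_def
  by (subst integrable_density) (auto simp: integrable_std_normal_moment)

lemma gau_moment: "(\<integral>x. x ^ n \<partial>std_gaussian) = (\<integral>x. std_normal_density x * x ^ n \<partial>lborel)"
  unfolding std_gaussian_def
  by (subst integral_density) auto

lemma gau_m1: "(\<integral>x. x \<partial>std_gaussian) = 0"
  using gau_moment[of 1] integral_std_normal_moment_odd[of 0] by simp

lemma gau_m2: "(\<integral>x. x^2 \<partial>std_gaussian) = 1"
  using gau_moment[of 2] integral_std_normal_moment_even[of 1] by simp

lemma gau_m4: "(\<integral>x. x^4 \<partial>std_gaussian) = 3"
proof -
  have "fact 4 / (2^2 * fact 2) = (3::real)" by (simp add: fact_numeral)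
  then show ?thesis using gau_moment[of 4] integral_std_normal_moment_even[of 2] by simp
qed

lemma ed_integrable: "integrable (entry_dist r) (\<lambda>x. x ^ n)"
  by (auto simp: entry_dist_def rad_integrable gau_moment_integrable)

lemma ed_m1: "(\<integral>x. x \<partial>entry_dist r) = 0"
  by (auto simp: entry_dist_def rad_int gau_m1)

lemma ed_m2: "(\<integral>x. x^2 \<partial>entry_dist r) = 1"
  by (auto simp: entry_dist_def rad_int gau_m2)

lemma ed_m4: "(\<integral>x. x^4 \<partial>entry_dist r) \<le> 3"
  by (auto simp: entry_dist_def rad_int gau_m4)

lemma ed_nn_even: "(\<integral>\<^sup>+x. ennreal (x^(2*n)) \<partial>entry_dist r) = ennreal (\<integral>x. x^(2*n) \<partial>entry_dist r)"
  apply (rule nn_integral_eq_integral)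
   apply (rule ed_integrable[of r "2*n"])
  by (simp add: power_mult)

abbreviation EM :: "bool \<Rightarrow> nat \<Rightarrow> (nat \<Rightarrow> real) measure" where
  "EM r d \<equiv> PiM {..<d} (\<lambda>_. entry_dist r)"

lemma pps_ed: "product_prob_space (\<lambda>_::nat. entry_dist r)"
  by (intro product_prob_spaceI prob_ed)

lemma prob_EM: "prob_space (EM r d)"
  by (intro prob_space_PiM prob_ed)

lemma ed_nn_sq: "(\<integral>\<^sup>+x. ennreal (x^2) \<partial>entry_dist r) = 1"
  using ed_nn_even[of r 1] ed_m2[of r] by simp

lemma ed_nn_4: "(\<integral>\<^sup>+x. ennreal (x^4) \<partial>entry_dist r) \<le> 3"
proof -
  have "ennreal (\<integral>x. x^4 \<partial>entry_dist r) \<le> ennreal 3" by (rule ennreal_leI) (rule ed_m4)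
  then show ?thesis using ed_nn_even[of r 2] by simp
qed

lemma ed_nn_1: "(\<integral>\<^sup>+x. 1 \<partial>entry_dist r) = 1"
  using prob_space.emeasure_space_1[OF prob_ed[of r]] by simp

lemma EM_pair_nn:
  assumes "a < d" "b < d"
  shows "(\<integral>\<^sup>+v. ennreal ((v a)^2 * (v b)^2) \<partial>EM r d) \<le> (if a = b then 3 else 1)"
proof -
  interpret product_prob_space "\<lambda>_::nat. entry_dist r" by (rule pps_ed)
  define f where "f i x = ennreal ((if i = a then x^2 else 1) * (if i = b then x^2 else 1))" for i x
  have eq: "ennreal ((v a)^2 * (v b)^2) = (\<Prod>i\<in>{..<d}. f i (v i))" for v
  proof -
    have "(\<Prod>i\<in>{..<d}. f i (v i)) = ennreal (\<Prod>i\<in>{..<d}. (if i = a then (v i)^2 else 1) * (if i = b then (v i)^2 else 1))"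
      unfolding f_def by (rule prod_ennreal) auto
    also have "(\<Prod>i\<in>{..<d}. (if i = a then (v i)^2 else 1) * (if i = b then (v i)^2 else 1)) = (v a)^2 * (v b)^2"
      using assms by (simp add: prod.distrib prod.delta)
    finally show ?thesis by simp
  qed
  have "(\<integral>\<^sup>+v. ennreal ((v a)^2 * (v b)^2) \<partial>EM r d) = (\<Prod>i\<in>{..<d}. \<integral>\<^sup>+x. f i x \<partial>entry_dist r)"
    unfolding eq by (rule product_nn_integral_prod) (auto simp: f_def)
  also have "\<dots> \<le> (\<Prod>i\<in>{..<d}. (if i = a \<and> i = b then 3 else 1))"
  proof (rule prod_mono_ennreal)
    fix i assume "i \<in> {..<d}"
    show "(\<integral>\<^sup>+x. f i x \<partial>entry_dist r) \<le> (if i = a \<and> i = b then 3 else 1)"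
    proof (cases "i = a \<and> i = b")
      case True
      then have "f i = (\<lambda>x. ennreal (x^4))" by (auto simp: f_def fun_eq_iff power2_eq_square) (simp add: algebra_simps eval_nat_numeral)
      then show ?thesis using True ed_nn_4 by simp
    next
      case False
      then have "f i = (\<lambda>x. ennreal (x^2)) \<or> f i = (\<lambda>x. 1)" by (auto simp: f_def fun_eq_iff)
      then show ?thesis using False ed_nn_sq ed_nn_1 by auto
    qed
  qed
  also have "(\<Prod>i\<in>{..<d}. (if i = a \<and> i = b then 3 else 1::ennreal)) = (if a = b then 3 else 1)"
    using assms by (cases "a = b") (auto simp: prod.delta intro!: prod.neutral)
  finally show ?thesis .
qed

lemma EM_T2:
  shows "(\<integral>\<^sup>+v. ennreal ((\<Sum>a<d. (v a)^2)^2) \<partial>EM r d) \<le> ennreal (real d ^ 2 + 2 * real d)"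
proof -
  have eq: "ennreal ((\<Sum>a<d. (v a)^2)^2) = (\<Sum>a<d. \<Sum>b<d. ennreal ((v a)^2 * (v b)^2))" for v :: "nat \<Rightarrow> real"
    by (simp add: power2_eq_square[of "sum _ _"] sum_product sum_nonneg)
  have "(\<integral>\<^sup>+v. ennreal ((\<Sum>a<d. (v a)^2)^2) \<partial>EM r d) = (\<Sum>a<d. \<Sum>b<d. \<integral>\<^sup>+v. ennreal ((v a)^2 * (v b)^2) \<partial>EM r d)"
    unfolding eq by (simp add: nn_integral_sum del: sum_ennreal)
  also have "\<dots> \<le> (\<Sum>a<d. \<Sum>b<d. (if a = b then 3 else 1))"
    by (intro sum_mono EM_pair_nn) auto
  also have "(\<Sum>a<d. \<Sum>b<d. (if a = b then 3 else 1::ennreal)) = (\<Sum>a<d. ennreal (real d + 2))"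
  proof (rule sum.cong[OF refl])
    fix a assume a: "a \<in> {..<d}"
    have "(\<Sum>b<d. (if a = b then 3 else 1::ennreal)) = (\<Sum>b<d. (1 + (if a = b then 2 else 0)))"
      by (intro sum.cong) auto
    also have "\<dots> = of_nat d + 2" using a by (simp add: sum.distrib)
    also have "\<dots> = ennreal (real d + 2)" by (simp add: ennreal_plus[symmetric] ennreal_of_nat_eq_real_of_nat)
    finally show "(\<Sum>b<d. (if a = b then 3 else 1::ennreal)) = ennreal (real d + 2)" .
  qed
  also have "\<dots> = ennreal (real d * (real d + 2))"
    by (simp add: ennreal_of_nat_eq_real_of_nat ennreal_mult)
  also have "\<dots> = ennreal (real d ^ 2 + 2 * real d)"
    by (simp add: power2_eq_square algebra_simps)
  finally show ?thesis .
qed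

lemma ed_int_poly: "integrable (entry_dist r) (\<lambda>x. (if c then x else 1) * (if c' then x else 1))"
  using ed_integrable[of r 1] ed_integrable[of r 2] ed_integrable[of r 0]
  by (cases c; cases c') (simp_all add: power2_eq_square)

lemma EM_pair_int:
  assumes "a < d" "b < d"
  shows "integrable (EM r d) (\<lambda>v. v a * v b)"
    and "(\<integral>v. v a * v b \<partial>EM r d) = (if a = b then 1 else 0)"
proof -
  interpret product_prob_space "\<lambda>_::nat. entry_dist r" by (rule pps_ed)
  define f where "f i x = (if i = a then x else 1) * (if i = b then x else (1::real))" for i x
  have eq: "(\<lambda>v. v a * v b) = (\<lambda>v. \<Prod>i\<in>{..<d}. f i (v i))"
    using assms by (simp add: f_def fun_eq_iff prod.distrib prod.delta)
  show "integrable (EM r d) (\<lambda>v. v a * v b)"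
    unfolding eq by (rule product_integrable_prod) (auto simp: f_def ed_int_poly)
  have "(\<integral>v. v a * v b \<partial>EM r d) = (\<Prod>i\<in>{..<d}. integral\<^sup>L (entry_dist r) (f i))"
    unfolding eq by (rule product_integral_prod) (auto simp: f_def ed_int_poly)
  also have "\<dots> = (\<Prod>i\<in>{..<d}. (if i = a \<and> a = b then 1 else if i = a \<or> i = b then 0 else 1))"
  proof (rule prod.cong[OF refl])
    fix i assume "i \<in> {..<d}"
    interpret prob_space "entry_dist r" by (rule prob_ed)
    have "f i = (\<lambda>x. x^2) \<and> i = a \<and> a = b \<or> f i = (\<lambda>x. x) \<and> (i = a \<or> i = b) \<and> a \<noteq> b \<or> f i = (\<lambda>x. 1) \<and> i \<noteq> a \<and> i \<noteq> b"
      by (auto simp: f_def fun_eq_iff power2_eq_square)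
    then show "integral\<^sup>L (entry_dist r) (f i) = (if i = a \<and> a = b then 1 else if i = a \<or> i = b then 0 else 1)"
      using ed_m1[of r] ed_m2[of r] prob_space.prob_space[OF prob_ed[of r]] by (elim disjE) auto
  qed
  also have "\<dots> = (if a = b then 1 else 0)"
  proof (cases "a = b")
    case True then show ?thesis using assms by (auto intro!: prod.neutral)
  next
    case False
    have "a \<in> {..<d}" "(if a = a \<and> a = b then 1 else if a = a \<or> a = b then 0 else 1::real) = 0" using assms False by auto
    then have "(\<Prod>i\<in>{..<d}. (if i = a \<and> a = b then 1 else if i = a \<or> i = b then 0 else 1::real)) = 0"
      by (intro prod_zero) auto
    then show ?thesis using False by simp
  qed
  finally show "(\<integral>v. v a * v b \<partial>EM r d) = (if a = b then 1 else 0)" .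
qed

abbreviation XM :: "nat \<Rightarrow> nat \<Rightarrow> (nat \<Rightarrow> bool) \<Rightarrow> (nat \<Rightarrow> nat \<Rightarrow> real) measure" where
  "XM d k rad \<equiv> PiM {..<k} (\<lambda>j. EM (rad j) d)"

lemma query_dist_eq: "query_dist d k rad = XM d k rad"
  by (simp add: query_dist_def)

lemma pps_EM: "product_prob_space (\<lambda>j. EM (rad j) d)"
  by (intro product_prob_spaceI prob_EM)

lemma prob_XM: "prob_space (XM d k rad)"
  by (intro prob_space_PiM prob_EM)

lemma kron_index_finite[simp]: "finite (kron_index d k)"
  unfolding kron_index_def by (simp add: finite_PiE)

lemma kron_index_card: "card (kron_index d k) = d ^ k"
  unfolding kron_index_def by (simp add: card_PiE)

lemma kron_index_mem: "i \<in> kron_index d k \<Longrightarrow> j < k \<Longrightarrow> i j < d"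
  unfolding kron_index_def by auto

lemma kron_sq_sum: "(\<Sum>i\<in>kron_index d k. (kron_vec k X i)^2) = (\<Prod>j<k. \<Sum>a<d. (X j a)^2)"
proof -
  have "(\<Prod>j<k. \<Sum>a<d. (X j a)^2) = (\<Sum>i\<in>kron_index d k. \<Prod>j<k. (X j (i j))^2)"
    unfolding kron_index_def by (rule prod_sum_PiE) auto
  also have "\<dots> = (\<Sum>i\<in>kron_index d k. (kron_vec k X i)^2)"
    by (simp add: kron_vec_def prod_power_distrib)
  finally show ?thesis by simp
qed

lemma meas_T[measurable]: "(\<lambda>v. \<Sum>a<d. (v a)^2) \<in> borel_measurable (EM r d)"
  by measurable

lemma XM_sq_nn:
  "(\<integral>\<^sup>+X. ennreal ((\<Sum>i\<in>kron_index d k. (kron_vec k X i)^2)^2) \<partial>XM d k rad)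
     \<le> ennreal ((real d ^ 2 + 2 * real d) ^ k)"
proof -
  interpret product_prob_space "\<lambda>j. EM (rad j) d" by (rule pps_EM)
  have eq: "ennreal ((\<Sum>i\<in>kron_index d k. (kron_vec k X i)^2)^2) = (\<Prod>j<k. ennreal ((\<Sum>a<d. (X j a)^2)^2))" for X
    unfolding kron_sq_sum by (simp add: prod_ennreal prod_power_distrib)
  have "(\<integral>\<^sup>+X. ennreal ((\<Sum>i\<in>kron_index d k. (kron_vec k X i)^2)^2) \<partial>XM d k rad)
      = (\<Prod>j<k. \<integral>\<^sup>+v. ennreal ((\<Sum>a<d. (v a)^2)^2) \<partial>EM (rad j) d)"
    unfolding eq by (rule product_nn_integral_prod) auto
  also have "\<dots> \<le> (\<Prod>j<k. ennreal (real d ^ 2 + 2 * real d))"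
    by (intro prod_mono_ennreal EM_T2)
  also have "\<dots> = ennreal ((real d ^ 2 + 2 * real d) ^ k)"
    by (simp add: ennreal_power del: ennreal_plus)
  finally show ?thesis .
qed

lemma XM_kron_int:
  assumes "i \<in> kron_index d k" "i' \<in> kron_index d k"
  shows "integrable (XM d k rad) (\<lambda>X. kron_vec k X i * kron_vec k X i')"
    and "(\<integral>X. kron_vec k X i * kron_vec k X i' \<partial>XM d k rad) = (if i = i' then 1 else 0)"
proof -
  interpret product_prob_space "\<lambda>j. EM (rad j) d" by (rule pps_EM)
  have eq: "(\<lambda>X. kron_vec k X i * kron_vec k X i') = (\<lambda>X. \<Prod>j<k. X j (i j) * X j (i' j))"
    by (simp add: kron_vec_def prod.distrib fun_eq_iff)
  have lt: "j < k \<Longrightarrow> i j < d" "j < k \<Longrightarrow> i' j < d" for j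
    using assms kron_index_mem by auto
  show "integrable (XM d k rad) (\<lambda>X. kron_vec k X i * kron_vec k X i')"
    unfolding eq by (rule product_integrable_prod) (auto intro: EM_pair_int lt)
  have "(\<integral>X. kron_vec k X i * kron_vec k X i' \<partial>XM d k rad) = (\<Prod>j<k. \<integral>v. v (i j) * v (i' j) \<partial>EM (rad j) d)"
    unfolding eq by (rule product_integral_prod) (auto intro: EM_pair_int lt)
  also have "\<dots> = (\<Prod>j<k. if i j = i' j then 1 else 0)"
    by (intro prod.cong refl EM_pair_int) (auto intro: lt)
  also have "\<dots> = (if i = i' then 1 else 0)"
  proof (cases "i = i'")
    case True then show ?thesis by simp
  next
    case False
    then obtain j where "i j \<noteq> i' j" by auto
    moreover have "j < k"
    proof (rule ccontr)
      assume "\<not> j < k"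
      then have "i j = undefined" "i' j = undefined" using assms unfolding kron_index_def by (auto simp: PiE_def extensional_def)
      then show False using \<open>i j \<noteq> i' j\<close> by simp
    qed
    ultimately have "(\<Prod>j<k. if i j = i' j then 1 else 0::real) = 0"
      by (intro prod_zero) auto
    then show ?thesis using False by simp
  qed
  finally show "(\<integral>X. kron_vec k X i * kron_vec k X i' \<partial>XM d k rad) = (if i = i' then 1 else 0)" .
qed

lemma quad_form_eq: "quad_form d k g X = (\<Sum>i\<in>kron_index d k. g i * kron_vec k X i)^2"
  unfolding quad_form_def matA_def power2_eq_square sum_product
  by (intro sum.cong refl) (simp add: algebra_simps)

lemma traceA_eq: "traceA d k g = (\<Sum>i\<in>kron_index d k. (g i)^2)"
  unfolding traceA_def matA_def by (simp add: power2_eq_square)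

lemma XM_quad_int:
  shows "integrable (XM d k rad) (quad_form d k g)"
    and "(\<integral>X. quad_form d k g X \<partial>XM d k rad) = traceA d k g"
proof -
  have eq: "quad_form d k g = (\<lambda>X. \<Sum>i\<in>kron_index d k. \<Sum>i'\<in>kron_index d k. (g i * g i') * (kron_vec k X i * kron_vec k X i'))"
    unfolding quad_form_def matA_def by (simp add: fun_eq_iff algebra_simps)
  show "integrable (XM d k rad) (quad_form d k g)"
    unfolding eq by (rule Bochner_Integration.integrable_sum, rule Bochner_Integration.integrable_sum, rule integrable_mult_right, rule XM_kron_int(1)) auto
  have "(\<integral>X. quad_form d k g X \<partial>XM d k rad) = (\<Sum>i\<in>kron_index d k. \<Sum>i'\<in>kron_index d k. (g i * g i') * (if i = i' then 1 else 0))"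
    unfolding eq
    by (simp add: Bochner_Integration.integral_sum Bochner_Integration.integrable_sum XM_kron_int integrable_mult_right cong: sum.cong)
  also have "\<dots> = traceA d k g"
    by (simp add: traceA_eq power2_eq_square if_distrib sum.delta cong: if_cong)
  finally show "(\<integral>X. quad_form d k g X \<partial>XM d k rad) = traceA d k g" .
qed

abbreviation GV :: "'i set \<Rightarrow> ('i \<Rightarrow> real) measure" where
  "GV I \<equiv> PiM I (\<lambda>_. std_gaussian)"

lemma pps_gau: "product_prob_space (\<lambda>_::'i. std_gaussian)"
  by (intro product_prob_spaceI prob_gau)

lemma prob_GV: "prob_space (GV I)"
  by (intro prob_space_PiM prob_gau)

lemma GV_coord_meas: "i \<in> I \<Longrightarrow> (\<lambda>g. g i) \<in> borel_measurable (GV I)"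
proof -
  assume i: "i \<in> I"
  have "(\<lambda>g. g i) \<in> measurable (GV I) std_gaussian" by (rule measurable_component_singleton[OF i])
  then show ?thesis unfolding measurable_cong_sets[OF refl gau_sets] .
qed

lemma GV_distr_coord: "i \<in> I \<Longrightarrow> distr (GV I) borel (\<lambda>g. g i) = std_gaussian"
proof -
  assume i: "i \<in> I"
  have "distr (GV I) borel (\<lambda>g. g i) = distr (GV I) std_gaussian (\<lambda>g. g i)"
    by (rule distr_cong) auto
  also have "\<dots> = std_gaussian"
    by (rule distr_PiM_component[OF prob_gau i])
  finally show ?thesis .
qed

lemma GV_indep:
  fixes I :: "'i set"
  assumes "I \<noteq> {}"
  shows "prob_space.indep_vars (GV I) (\<lambda>_. borel) (\<lambda>i g. g i) I"
proof -
  interpret P: prob_space "GV I" by (rule prob_GV)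
  show ?thesis
  proof (subst P.indep_vars_iff_distr_eq_PiM'[OF assms])
    show "(\<lambda>g::'i \<Rightarrow> real. g i) \<in> measurable (GV I) borel" if "i \<in> I" for i using that by (rule GV_coord_meas)
    have "distr (GV I) (PiM I (\<lambda>_. borel)) (\<lambda>x. restrict (\<lambda>i. x i) I) = distr (GV I) (GV I) (\<lambda>x. x)"
    proof (rule distr_cong)
      show "sets (PiM I (\<lambda>_. borel)) = sets (GV I)" by (rule sets_PiM_cong) auto
    qed (auto simp: space_PiM)
    also have "\<dots> = GV I" by simp
    also have "\<dots> = PiM I (\<lambda>i. distr (GV I) borel (\<lambda>g. g i))"
      by (rule PiM_cong) (auto simp: GV_distr_coord)
    finally show "distr (GV I) (PiM I (\<lambda>_. borel)) (\<lambda>x. restrict (\<lambda>i. x i) I) = PiM I (\<lambda>i. distr (GV I) borel (\<lambda>g. g i))" .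
  qed
qed

lemma GV_distributed: "i \<in> I \<Longrightarrow> distributed (GV I) lborel (\<lambda>g. g i) std_normal_density"
proof -
  assume i: "i \<in> I"
  have "distr (GV I) lborel (\<lambda>g. g i) = distr (GV I) borel (\<lambda>g. g i)"
    by (rule distr_cong) auto
  then have 1: "distr (GV I) lborel (\<lambda>g. g i) = density lborel std_normal_density"
    using GV_distr_coord[OF i] by (simp add: std_gaussian_def)
  have 2: "(\<lambda>g. g i) \<in> measurable (GV I) lborel" using GV_coord_meas[OF i] unfolding measurable_lborel1 .
  have 3: "(\<lambda>x. ennreal (std_normal_density x)) \<in> borel_measurable lborel"
    unfolding measurable_lborel2 by (rule measurable_compose[OF borel_measurable_normal_density measurable_ennreal])
  show ?thesis unfolding distributed_def using 1 2 3 by blast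
qed

lemma GV_fourth:
  assumes fin: "finite I"
  shows "(\<integral>\<^sup>+g. ennreal ((\<Sum>i\<in>I. c i * g i)^4) \<partial>GV I) = ennreal (3 * (\<Sum>i\<in>I. (c i)^2)^2)"
proof -
  interpret P: prob_space "GV I" by (rule prob_GV)
  define J where "J = {i\<in>I. c i \<noteq> 0}"
  have J: "J \<subseteq> I" "finite J" using fin by (auto simp: J_def)
  have s1: "(\<Sum>i\<in>I. c i * g i) = (\<Sum>i\<in>J. c i * g i)" for g
    unfolding J_def using fin by (intro sum.mono_neutral_right) auto
  have s2: "(\<Sum>i\<in>I. (c i)^2) = (\<Sum>i\<in>J. (c i)^2)"
    unfolding J_def using fin by (intro sum.mono_neutral_right) auto
  show ?thesis
  proof (cases "J = {}")
    case True
    then show ?thesis unfolding s1 s2 by simp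
  next
    case False
    then have "I \<noteq> {}" using J by auto
    have ind: "P.indep_vars (\<lambda>_. borel) (\<lambda>i g. c i * g i) J"
      using P.indep_vars_compose2[OF P.indep_vars_subset[OF GV_indep[OF \<open>I \<noteq> {}\<close>] J(1)], of "\<lambda>i x. c i * x" "\<lambda>_. borel"]
      by simp
    have dist: "distributed (GV I) lborel (\<lambda>g. c i * g i) (normal_density 0 \<bar>c i\<bar>)" if "i \<in> J" for i
    proof -
      have "i \<in> I" "c i \<noteq> 0" using that J by (auto simp: J_def)
      show ?thesis using P.normal_density_affine[OF GV_distributed[OF \<open>i \<in> I\<close>], of "c i" 0] \<open>c i \<noteq> 0\<close> by simp
    qed
    have pos: "0 < \<bar>c i\<bar>" if "i \<in> J" for i using that by (auto simp: J_def)
    define s where "s = (\<Sum>i\<in>J. (c i)^2)"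
    have s_pos: "0 < s" unfolding s_def using False J by (intro sum_pos) (auto simp: J_def)
    have D: "distributed (GV I) lborel (\<lambda>g. \<Sum>i\<in>J. c i * g i) (normal_density 0 (sqrt s))"
      using P.sum_indep_normal[OF J(2) False ind pos dist] by (simp add: s_def)
    have sq: "0 < sqrt s" using s_pos by simp
    have "(\<integral>\<^sup>+g. ennreal ((\<Sum>i\<in>J. c i * g i)^4) \<partial>GV I) = (\<integral>\<^sup>+y. normal_density 0 (sqrt s) y * ennreal (y^4) \<partial>lborel)"
      by (rule distributed_nn_integral[OF D, symmetric]) simp
    also have "\<dots> = (\<integral>\<^sup>+y. ennreal (normal_density 0 (sqrt s) y * y^(2*2)) \<partial>lborel)"
      by (intro nn_integral_cong) (simp add: ennreal_mult)
    also have "\<dots> = ennreal (\<integral>y. normal_density 0 (sqrt s) y * y^(2*2) \<partial>lborel)"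
      using integrable_normal_moment[of "sqrt s" 0 "2*2"] sq
      by (intro nn_integral_eq_integral) (auto simp: power_mult)
    also have "(\<integral>y. normal_density 0 (sqrt s) y * y^(2*2) \<partial>lborel) = fact (2 * 2) / ((2 / (sqrt s)\<^sup>2)^2 * fact 2)"
      using integral_normal_moment_even[of "sqrt s" 0 2] sq by simp
    also have "\<dots> = 3 * s^2"
      using s_pos by (simp add: fact_numeral field_simps power2_eq_square)
    finally show ?thesis unfolding s1 s2 s_def .
  qed
qed

definition t0 :: real where "t0 = 48 * 96^2"
definition \<delta>0 :: real where "\<delta>0 = ln 2 / t0"

lemma t0_pos: "0 < t0" by (simp add: t0_def)
lemma \<delta>0_pos: "0 < \<delta>0" by (simp add: \<delta>0_def t0_pos)

lemma std_normal_le1: "std_normal_density x \<le> 1"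
proof -
  have "exp (- x\<^sup>2 / 2) \<le> 1" by simp
  moreover have "1 \<le> sqrt (2 * pi)" using pi_gt3 by simp
  then have "1 / sqrt (2 * pi) \<le> 1" by simp
  ultimately show ?thesis unfolding std_normal_density_def
    using mult_mono[of "1 / sqrt (2 * pi)" 1 "exp (- x\<^sup>2 / 2)" 1] by simp
qed

lemma gau_exp_bound: "(\<integral>\<^sup>+x. ennreal (exp (- t0 * x^2)) \<partial>std_gaussian) \<le> ennreal (1/24)"
proof -
  define a :: real where "a = 1/96"
  have ta: "t0 * a^2 = 48" by (simp add: t0_def a_def power2_eq_square)
  have e48: "exp (-48::real) \<le> 1/48"
  proof -
    have "49 \<le> exp (48::real)" using exp_ge_add_one_self[of 48] by simp
    then show ?thesis by (simp add: exp_minus field_simps)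
  qed
  have pw: "ennreal (std_normal_density x) * ennreal (exp (- t0 * x^2))
      \<le> indicator {-a..a} x + ennreal (exp (-48)) * ennreal (std_normal_density x)" for x
  proof (cases "\<bar>x\<bar> \<le> a")
    case True
    have "std_normal_density x * exp (- t0 * x^2) \<le> 1 * 1"
      using std_normal_le1[of x] t0_pos by (intro mult_mono) auto
    then have "ennreal (std_normal_density x) * ennreal (exp (- t0 * x^2)) \<le> 1"
      by (simp add: ennreal_mult[symmetric] ennreal_le_1)
    also have "\<dots> \<le> indicator {-a..a} x + ennreal (exp (-48)) * ennreal (std_normal_density x)"
      using True by (simp add: indicator_def abs_le_iff)
    finally show ?thesis .
  next
    case False
    then have "a^2 \<le> x^2" using a_def by (simp add: abs_le_square_iff[symmetric])
    then have "t0 * a^2 \<le> t0 * x^2" using t0_pos by simp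
    then have "exp (- t0 * x^2) \<le> exp (-48)" using ta by simp
    then have "ennreal (exp (- t0 * x^2)) \<le> ennreal (exp (-48))" by (rule ennreal_leI)
    then have "ennreal (std_normal_density x) * ennreal (exp (- t0 * x^2)) \<le> ennreal (exp (-48)) * ennreal (std_normal_density x)"
      by (simp add: mult.commute mult_left_mono)
    then show ?thesis by (simp add: add_increasing)
  qed
  have "(\<integral>\<^sup>+x. ennreal (exp (- t0 * x^2)) \<partial>std_gaussian) = (\<integral>\<^sup>+x. ennreal (std_normal_density x) * ennreal (exp (- t0 * x^2)) \<partial>lborel)"
    by (rule gau_nn) simp
  also have "\<dots> \<le> (\<integral>\<^sup>+x. indicator {-a..a} x + ennreal (exp (-48)) * ennreal (std_normal_density x) \<partial>lborel)"
    by (rule nn_integral_mono) (rule pw)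
  also have "\<dots> = (\<integral>\<^sup>+x. indicator {-a..a} x \<partial>lborel) + ennreal (exp (-48)) * (\<integral>\<^sup>+x. ennreal (std_normal_density x) \<partial>lborel)"
    by (subst nn_integral_add) (auto simp: nn_integral_cmult)
  also have "(\<integral>\<^sup>+x. ennreal (std_normal_density x) \<partial>lborel) = 1"
    using prob_space.emeasure_space_1[OF prob_gau] by (simp add: std_gaussian_def emeasure_density)
  also have "(\<integral>\<^sup>+x. indicator {-a..a} x \<partial>lborel) = ennreal (2 * a)"
    by (simp add: a_def)
  also have "ennreal (2 * a) + ennreal (exp (-48)) * 1 = ennreal (2 * a + exp (-48))"
    by (simp add: a_def ennreal_plus)
  also have "\<dots> \<le> ennreal (1/24)"
    using e48 by (intro ennreal_leI) (simp add: a_def)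
  finally show ?thesis .
qed

lemma GV_S_meas: "finite I \<Longrightarrow> (\<lambda>g. \<Sum>i\<in>I. (g i)^2) \<in> borel_measurable (GV I)"
  by (intro borel_measurable_sum borel_measurable_power GV_coord_meas)

lemma GV_exp_bound:
  assumes "finite I"
  shows "(\<integral>\<^sup>+g. ennreal (exp (- t0 * (\<Sum>i\<in>I. (g i)^2))) \<partial>GV I) \<le> ennreal ((1/24) ^ card I)"
proof -
  interpret product_prob_space "\<lambda>_::'a. std_gaussian" by (rule pps_gau)
  have eq: "ennreal (exp (- t0 * (\<Sum>i\<in>I. (g i)^2))) = (\<Prod>i\<in>I. ennreal (exp (- t0 * (g i)^2)))" for g
    using assms by (simp add: sum_distrib_left exp_sum prod_ennreal)
  have "(\<integral>\<^sup>+g. ennreal (exp (- t0 * (\<Sum>i\<in>I. (g i)^2))) \<partial>GV I) = (\<Prod>i\<in>I. \<integral>\<^sup>+x. ennreal (exp (- t0 * x^2)) \<partial>std_gaussian)"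
    unfolding eq by (rule product_nn_integral_prod[OF assms]) simp
  also have "\<dots> \<le> (\<Prod>i\<in>I. ennreal (1/24))"
    by (intro prod_mono_ennreal gau_exp_bound)
  also have "\<dots> = ennreal ((1/24) ^ card I)"
    by (simp add: ennreal_power)
  finally show ?thesis .
qed

lemma GV_lower_tail:
  assumes "finite I" "I \<noteq> {}"
  shows "emeasure (GV I) {g\<in>space (GV I). (\<Sum>i\<in>I. (g i)^2) < \<delta>0 * card I} \<le> ennreal (1/12)"
proof -
  define N where "N = card I"
  have N: "1 \<le> N" using assms by (simp add: N_def Suc_le_eq card_gt_0_iff)
  define A where "A = {g\<in>space (GV I). (\<Sum>i\<in>I. (g i)^2) < \<delta>0 * N}"
  have Smeas[measurable]: "(\<lambda>g. \<Sum>i\<in>I. (g i)^2) \<in> borel_measurable (GV I)" by (rule GV_S_meas[OF assms(1)])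
  have Ameas: "A \<in> sets (GV I)" unfolding A_def by measurable
  have pw: "indicator A g \<le> ennreal (2^N) * ennreal (exp (- t0 * (\<Sum>i\<in>I. (g i)^2)))" for g
  proof (cases "g \<in> A")
    case True
    then have "t0 * (\<Sum>i\<in>I. (g i)^2) < t0 * (\<delta>0 * N)" using t0_pos by (simp add: A_def)
    also have "t0 * (\<delta>0 * N) = N * ln 2" using t0_pos by (simp add: \<delta>0_def)
    finally have "1 \<le> exp (N * ln 2 - t0 * (\<Sum>i\<in>I. (g i)^2))" by simp
    also have "exp (N * ln 2 - t0 * (\<Sum>i\<in>I. (g i)^2)) = 2^N * exp (- t0 * (\<Sum>i\<in>I. (g i)^2))"
      by (simp add: exp_diff exp_of_nat_mult divide_inverse exp_minus)
    finally have "ennreal 1 \<le> ennreal (2^N * exp (- t0 * (\<Sum>i\<in>I. (g i)^2)))" by (rule ennreal_leI)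
    then show ?thesis using True by (simp add: ennreal_mult)
  qed simp
  have "emeasure (GV I) A = (\<integral>\<^sup>+g. indicator A g \<partial>GV I)" using Ameas by simp
  also have "\<dots> \<le> (\<integral>\<^sup>+g. ennreal (2^N) * ennreal (exp (- t0 * (\<Sum>i\<in>I. (g i)^2))) \<partial>GV I)"
    by (rule nn_integral_mono) (rule pw)
  also have "\<dots> = ennreal (2^N) * (\<integral>\<^sup>+g. ennreal (exp (- t0 * (\<Sum>i\<in>I. (g i)^2))) \<partial>GV I)"
    by (rule nn_integral_cmult) simp
  also have "\<dots> \<le> ennreal (2^N) * ennreal ((1/24) ^ N)"
    unfolding N_def by (intro mult_left_mono GV_exp_bound assms) simp
  also have "\<dots> = ennreal ((1/12) ^ N)"
    by (simp add: ennreal_mult[symmetric] power_mult_distrib[symmetric])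
  also have "\<dots> \<le> ennreal (1/12)"
    using N by (intro ennreal_leI) (simp add: power_le_one_iff power_decreasing[of 1 N "1/12::real", simplified])
  finally show ?thesis unfolding A_def N_def .
qed

lemma avg_cheb:
  fixes M :: "'a measure" and f :: "'a \<Rightarrow> real"
  assumes P: "prob_space M" and fm: "f \<in> borel_measurable M"
    and int2: "integrable M (\<lambda>x. (f x)^2)"
    and mu: "(\<integral>x. f x \<partial>M) = \<mu>" and V: "(\<integral>x. (f x - \<mu>)^2 \<partial>M) = V"
    and l: "0 < l" and a: "0 < a"
  shows "emeasure (PiM {..<l} (\<lambda>_. M)) {Xs \<in> space (PiM {..<l} (\<lambda>_. M)). a \<le> \<bar>(1 / real l) * (\<Sum>s<l. f (Xs s)) - \<mu>\<bar>}
     \<le> ennreal (V / (real l * a^2))"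
proof -
  interpret M: prob_space M by (rule P)
  have PPp: "prob_space (PiM {..<l} (\<lambda>_. M))" by (rule prob_space_PiM) (rule P)
  interpret PP: prob_space "PiM {..<l} (\<lambda>_. M)" by (rule PPp)
  interpret product_prob_space "\<lambda>_::nat. M" by (intro product_prob_spaceI P)
  let ?P = "PiM {..<l} (\<lambda>_. M)"
  have int1: "integrable M f" using M.square_integrable_imp_integrable[OF fm int2] .
  have intc: "integrable M (\<lambda>x. f x - \<mu>)" using int1 by simp
  have intc2: "integrable M (\<lambda>x. (f x - \<mu>)^2)"
    using int1 int2 by (simp add: power2_diff)
  have m0: "(\<integral>x. f x - \<mu> \<partial>M) = 0" using int1 mu M.prob_space by simp
  define h where "h (s::nat) (s'::nat) (i::nat) x = (if i = s then f x - \<mu> else 1) * (if i = s' then f x - \<mu> else 1)" for s s' i x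
  have hint: "integrable M (h s s' i)" for s s' i
  proof -
    have "h s s' i = (\<lambda>x. (f x - \<mu>)^2) \<or> h s s' i = (\<lambda>x. f x - \<mu>) \<or> h s s' i = (\<lambda>x. 1)"
      by (auto simp: h_def fun_eq_iff power2_eq_square)
    then show ?thesis using intc intc2 by auto
  qed
  have hval: "(\<integral>x. h s s' i x \<partial>M) = (if i = s \<and> i = s' then V else if i = s \<or> i = s' then 0 else 1)" for s s' i
  proof -
    have "h s s' i = (\<lambda>x. (f x - \<mu>)^2) \<and> i = s \<and> i = s' \<or> h s s' i = (\<lambda>x. f x - \<mu>) \<and> (i = s \<or> i = s') \<and> s \<noteq> s'
       \<or> h s s' i = (\<lambda>x. 1) \<and> i \<noteq> s \<and> i \<noteq> s'"
      by (auto simp: h_def fun_eq_iff power2_eq_square)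
    then show ?thesis using V m0 M.prob_space by (elim disjE) auto
  qed
  have Zprod: "(f (Xs s) - \<mu>) * (f (Xs s') - \<mu>) = (\<Prod>i<l. h s s' i (Xs i))" if "s < l" "s' < l" for Xs s s'
    using that by (simp add: h_def prod.distrib prod.delta)
  have ZZ: "integrable ?P (\<lambda>Xs. (f (Xs s) - \<mu>) * (f (Xs s') - \<mu>))
      \<and> (\<integral>Xs. (f (Xs s) - \<mu>) * (f (Xs s') - \<mu>) \<partial>?P) = (if s = s' then V else 0)" if "s < l" "s' < l" for s s'
  proof -
    have eq: "(\<lambda>Xs. (f (Xs s) - \<mu>) * (f (Xs s') - \<mu>)) = (\<lambda>Xs. \<Prod>i<l. h s s' i (Xs i))"
      using Zprod that by auto
    have "integrable ?P (\<lambda>Xs. \<Prod>i<l. h s s' i (Xs i))"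
      by (rule product_integrable_prod) (auto intro: hint)
    moreover have "(\<integral>Xs. (\<Prod>i<l. h s s' i (Xs i)) \<partial>?P) = (\<Prod>i<l. \<integral>x. h s s' i x \<partial>M)"
      by (rule product_integral_prod) (auto intro: hint)
    moreover have "(\<Prod>i<l. \<integral>x. h s s' i x \<partial>M) = (if s = s' then V else 0)"
    proof (cases "s = s'")
      case True
      have "(\<Prod>i<l. \<integral>x. h s s' i x \<partial>M) = (\<Prod>i<l. if i = s then V else 1)"
        using True by (intro prod.cong refl) (simp add: hval)
      then show ?thesis using True that by simp
    next
      case False
      have "(\<Prod>i<l. \<integral>x. h s s' i x \<partial>M) = 0"
        using False that by (intro prod_zero) (auto simp: hval intro!: bexI[of _ s])
      then show ?thesis using False by simp
    qed
    ultimately show ?thesis unfolding eq by simp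
  qed
  define W where "W Xs = (1 / real l) * (\<Sum>s<l. f (Xs s)) - \<mu>" for Xs
  have Wsum: "W Xs = (1 / real l) * (\<Sum>s<l. f (Xs s) - \<mu>)" for Xs
    using l by (simp add: W_def sum_subtractf field_simps)
  have W2: "(W Xs)^2 = (1 / real l)^2 * (\<Sum>s<l. \<Sum>s'<l. (f (Xs s) - \<mu>) * (f (Xs s') - \<mu>))" for Xs
    unfolding Wsum by (simp add: power_mult_distrib power2_eq_square sum_product)
  have fcomp: "s < l \<Longrightarrow> (\<lambda>Xs. f (Xs s)) \<in> borel_measurable ?P" for s
  proof -
    assume s: "s < l"
    have 1: "(\<lambda>Xs. Xs s) \<in> measurable ?P M" by (rule measurable_component_singleton) (use s in simp)
    show ?thesis by (rule measurable_compose[OF 1 fm])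
  qed
  have Wm: "W \<in> borel_measurable ?P"
    unfolding W_def by (intro borel_measurable_diff borel_measurable_times borel_measurable_const borel_measurable_sum fcomp) simp
  have intW2: "integrable ?P (\<lambda>Xs. (W Xs)^2)"
    unfolding W2 by (intro integrable_mult_right Bochner_Integration.integrable_sum) (use ZZ in auto)
  have EW2: "(\<integral>Xs. (W Xs)^2 \<partial>?P) = V / real l"
  proof -
    have I1: "(\<integral>Xs. (\<Sum>s'<l. (f (Xs s) - \<mu>) * (f (Xs s') - \<mu>)) \<partial>?P) = (\<Sum>s'<l. if s = s' then V else 0)" if "s < l" for s
    proof -
      have "(\<integral>Xs. (\<Sum>s'<l. (f (Xs s) - \<mu>) * (f (Xs s') - \<mu>)) \<partial>?P) = (\<Sum>s'<l. \<integral>Xs. (f (Xs s) - \<mu>) * (f (Xs s') - \<mu>) \<partial>?P)"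
        by (rule Bochner_Integration.integral_sum) (use ZZ that in auto)
      also have "\<dots> = (\<Sum>s'<l. if s = s' then V else 0)"
        by (rule sum.cong) (use ZZ that in auto)
      finally show ?thesis .
    qed
    have I2: "(\<integral>Xs. (\<Sum>s<l. \<Sum>s'<l. (f (Xs s) - \<mu>) * (f (Xs s') - \<mu>)) \<partial>?P) = (\<Sum>s<l. \<integral>Xs. (\<Sum>s'<l. (f (Xs s) - \<mu>) * (f (Xs s') - \<mu>)) \<partial>?P)"
      by (rule Bochner_Integration.integral_sum) (use ZZ in \<open>auto intro!: Bochner_Integration.integrable_sum\<close>)
    have "(\<integral>Xs. (W Xs)^2 \<partial>?P) = (1 / real l)^2 * (\<Sum>s<l. \<Sum>s'<l. (if s = s' then V else 0))"
      unfolding W2 by (simp add: I2 I1)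
    also have "\<dots> = V / real l" using l by (simp add: power2_eq_square field_simps)
    finally show ?thesis .
  qed
  let ?A = "{Xs \<in> space ?P. a \<le> \<bar>W Xs\<bar>}"
  have Am: "?A \<in> sets ?P" using Wm by measurable
  have pw: "indicator ?A Xs \<le> ennreal ((W Xs)^2 / a^2)" for Xs
  proof (cases "Xs \<in> ?A")
    case True
    then have "a^2 \<le> (W Xs)^2" using a by (simp add: abs_le_square_iff[symmetric] abs_of_pos)
    then have "1 \<le> (W Xs)^2 / a^2" using a by simp
    then show ?thesis using True by simp
  qed simp
  have "emeasure ?P ?A = (\<integral>\<^sup>+Xs. indicator ?A Xs \<partial>?P)" using Am by simp
  also have "\<dots> \<le> (\<integral>\<^sup>+Xs. ennreal ((W Xs)^2 / a^2) \<partial>?P)"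
    by (rule nn_integral_mono) (rule pw)
  also have "\<dots> = ennreal (\<integral>Xs. (W Xs)^2 / a^2 \<partial>?P)"
    by (rule nn_integral_eq_integral) (use intW2 in auto)
  also have "(\<integral>Xs. (W Xs)^2 / a^2 \<partial>?P) = V / (real l * a^2)"
    using EW2 by simp
  finally show ?thesis unfolding W_def .
qed

lemma XM_coord: "j < k \<Longrightarrow> a < d \<Longrightarrow> (\<lambda>X. X j a) \<in> borel_measurable (XM d k rad)"
proof -
  assume j: "j < k" and a: "a < d"
  have 1: "(\<lambda>X. X j) \<in> measurable (XM d k rad) (EM (rad j) d)"
    by (rule measurable_component_singleton) (use j in simp)
  have 2: "(\<lambda>v. v a) \<in> measurable (EM (rad j) d) (entry_dist (rad j))"
    by (rule measurable_component_singleton) (use a in simp)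
  have 3: "(\<lambda>v. v a) \<in> borel_measurable (EM (rad j) d)"
    using 2 unfolding measurable_cong_sets[OF refl ed_sets] .
  show ?thesis by (rule measurable_compose[OF 1 3])
qed

lemma fst_coord: "i \<in> I \<Longrightarrow> (\<lambda>p. fst p i) \<in> borel_measurable (GV I \<Otimes>\<^sub>M N)"
  by (rule measurable_compose[OF measurable_fst GV_coord_meas])

lemma snd_coord: "j < k \<Longrightarrow> a < d \<Longrightarrow> (\<lambda>p. snd p j a) \<in> borel_measurable (N \<Otimes>\<^sub>M XM d k rad)"
  by (rule measurable_compose[OF measurable_snd XM_coord])

lemma quad_meas: "(\<lambda>p. quad_form d k (fst p) (snd p)) \<in> borel_measurable (GV (kron_index d k) \<Otimes>\<^sub>M XM d k rad)"
  unfolding quad_form_def kron_vec_def matA_def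
  by (intro borel_measurable_sum borel_measurable_times borel_measurable_prod fst_coord snd_coord)
     (auto simp: kron_index_mem)

lemma trace_meas: "(\<lambda>g. traceA d k g) \<in> borel_measurable (GV (kron_index d k))"
  unfolding traceA_eq by (rule GV_S_meas) simp

definition Fq :: "nat \<Rightarrow> nat \<Rightarrow> (nat \<Rightarrow> bool) \<Rightarrow> ((nat \<Rightarrow> nat) \<Rightarrow> real) \<Rightarrow> ennreal" where
  "Fq d k rad g = (\<integral>\<^sup>+X. ennreal ((quad_form d k g X)^2) \<partial>XM d k rad)"

lemma Fq_meas: "Fq d k rad \<in> borel_measurable (GV (kron_index d k))"
proof -
  interpret X: prob_space "XM d k rad" by (rule prob_XM)
  have "(\<lambda>p. ennreal ((quad_form d k (fst p) (snd p))^2)) \<in> borel_measurable (GV (kron_index d k) \<Otimes>\<^sub>M XM d k rad)"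
    by (intro measurable_compose[OF _ measurable_ennreal] borel_measurable_power quad_meas)
  then have "case_prod (\<lambda>g X. ennreal ((quad_form d k g X)^2)) \<in> borel_measurable (GV (kron_index d k) \<Otimes>\<^sub>M XM d k rad)"
    by (simp add: case_prod_unfold)
  then show ?thesis unfolding Fq_def[abs_def] by (rule X.borel_measurable_nn_integral)
qed

lemma Fq_int:
  "(\<integral>\<^sup>+g. Fq d k rad g \<partial>GV (kron_index d k)) \<le> ennreal (3 * (real d ^ 2 + 2 * real d) ^ k)"
proof -
  let ?I = "kron_index d k"
  interpret G: prob_space "GV ?I" by (rule prob_GV)
  interpret X: prob_space "XM d k rad" by (rule prob_XM)
  interpret pair_sigma_finite "GV ?I" "XM d k rad" ..
  have "(\<lambda>p. ennreal ((quad_form d k (fst p) (snd p))^2)) \<in> borel_measurable (GV ?I \<Otimes>\<^sub>M XM d k rad)"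
    by (intro measurable_compose[OF _ measurable_ennreal] borel_measurable_power quad_meas)
  then have m: "case_prod (\<lambda>g X. ennreal ((quad_form d k g X)^2)) \<in> borel_measurable (GV ?I \<Otimes>\<^sub>M XM d k rad)"
    by (simp add: case_prod_unfold)
  have "(\<integral>\<^sup>+g. Fq d k rad g \<partial>GV ?I) = (\<integral>\<^sup>+X. (\<integral>\<^sup>+g. ennreal ((quad_form d k g X)^2) \<partial>GV ?I) \<partial>XM d k rad)"
    unfolding Fq_def by (rule Fubini'[OF m, symmetric])
  also have "\<dots> = (\<integral>\<^sup>+X. ennreal (3 * (\<Sum>i\<in>?I. (kron_vec k X i)^2)^2) \<partial>XM d k rad)"
  proof (rule nn_integral_cong)
    fix X
    have "(quad_form d k g X)^2 = (\<Sum>i\<in>?I. kron_vec k X i * g i)^4" for g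
      unfolding quad_form_eq by (simp add: mult.commute power_mult[symmetric])
    then show "(\<integral>\<^sup>+g. ennreal ((quad_form d k g X)^2) \<partial>GV ?I) = ennreal (3 * (\<Sum>i\<in>?I. (kron_vec k X i)^2)^2)"
      by (simp add: GV_fourth)
  qed
  also have "\<dots> = 3 * (\<integral>\<^sup>+X. ennreal ((\<Sum>i\<in>?I. (kron_vec k X i)^2)^2) \<partial>XM d k rad)"
  proof -
    have mT: "(\<lambda>X. (\<Sum>i\<in>?I. (kron_vec k X i)^2)^2) \<in> borel_measurable (XM d k rad)"
      unfolding kron_vec_def
      by (intro borel_measurable_power borel_measurable_sum borel_measurable_prod XM_coord) (auto simp: kron_index_mem)
    show ?thesis
      by (subst nn_integral_cmult[symmetric]) (use mT in \<open>auto simp: ennreal_mult\<close>)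
  qed
  also have "\<dots> \<le> 3 * ennreal ((real d ^ 2 + 2 * real d) ^ k)"
    by (intro mult_left_mono XM_sq_nn) simp
  also have "\<dots> = ennreal (3 * (real d ^ 2 + 2 * real d) ^ k)"
    by (simp add: ennreal_mult)
  finally show ?thesis .
qed

lemma Fq_markov:
  fixes B :: real
  assumes B: "B = 36 * (real d ^ 2 + 2 * real d) ^ k" and d: "1 \<le> d"
  shows "emeasure (GV (kron_index d k)) {g\<in>space (GV (kron_index d k)). ennreal B < Fq d k rad g} \<le> ennreal (1/12)"
proof -
  let ?G = "GV (kron_index d k)"
  have Bpos: "0 < B" using B d by (simp add: add_pos_nonneg)
  let ?A = "{g\<in>space ?G. ennreal B < Fq d k rad g}"
  have [measurable]: "Fq d k rad \<in> borel_measurable ?G" by (rule Fq_meas)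
  have Am: "?A \<in> sets ?G" by measurable
  have pw: "indicator ?A g \<le> Fq d k rad g * ennreal (1 / B)" for g
  proof (cases "g \<in> ?A")
    case True
    then have "ennreal B \<le> Fq d k rad g" by auto
    then have "ennreal B * ennreal (1 / B) \<le> Fq d k rad g * ennreal (1 / B)" by (rule mult_right_mono) simp
    moreover have "ennreal B * ennreal (1 / B) = 1" using Bpos by (simp add: ennreal_mult[symmetric])
    ultimately show ?thesis using True by simp
  qed simp
  have "emeasure ?G ?A = (\<integral>\<^sup>+g. indicator ?A g \<partial>?G)" using Am by simp
  also have "\<dots> \<le> (\<integral>\<^sup>+g. Fq d k rad g * ennreal (1 / B) \<partial>?G)"
    by (rule nn_integral_mono) (rule pw)
  also have "\<dots> = (\<integral>\<^sup>+g. Fq d k rad g \<partial>?G) * ennreal (1 / B)"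
    by (rule nn_integral_multc) simp
  also have "\<dots> \<le> ennreal (3 * (real d ^ 2 + 2 * real d) ^ k) * ennreal (1 / B)"
    by (intro mult_right_mono Fq_int) simp
  also have "\<dots> = ennreal (1/12)"
    using Bpos d by (simp add: B ennreal_mult[symmetric] add_nonneg_eq_0_iff)
  finally show ?thesis .
qed

definition C0 :: real where "C0 = 36 / \<delta>0^2"

lemma C0_pos: "0 < C0" using \<delta>0_pos by (simp add: C0_def)

lemma quad_meas_g: "g \<in> space (GV (kron_index d k)) \<Longrightarrow> quad_form d k g \<in> borel_measurable (XM d k rad)"
  using measurable_Pair2[OF quad_meas] by simp

lemma good_g:
  assumes d: "1 \<le> d" and g: "g \<in> space (GV (kron_index d k))"
    and B: "B = 36 * (real d ^ 2 + 2 * real d) ^ k"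
    and F: "Fq d k rad g \<le> ennreal B" and S: "\<delta>0 * real (d ^ k) \<le> traceA d k g"
  shows "integrable (XM d k rad) (\<lambda>X. (quad_form d k g X)^2)"
    and "var_of (XM d k rad) (quad_form d k g) = (\<integral>X. (quad_form d k g X - traceA d k g)^2 \<partial>XM d k rad)"
    and "var_of (XM d k rad) (quad_form d k g) \<le> C0 * (2 + 1 / real d) ^ k * (traceA d k g)^2"
    and "0 < traceA d k g"
proof -
  interpret X: prob_space "XM d k rad" by (rule prob_XM)
  have Qm[measurable]: "quad_form d k g \<in> borel_measurable (XM d k rad)" by (rule quad_meas_g[OF g])
  have Bnn: "0 \<le> B" using B by simp
  have fin: "(\<integral>\<^sup>+X. ennreal (norm ((quad_form d k g X)^2)) \<partial>XM d k rad) < \<infinity>"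
  proof -
    have "(\<integral>\<^sup>+X. ennreal (norm ((quad_form d k g X)^2)) \<partial>XM d k rad) = Fq d k rad g"
      unfolding Fq_def by simp
    also have "\<dots> \<le> ennreal B" by (rule F)
    also have "\<dots> < \<infinity>" by simp
    finally show ?thesis .
  qed
  show int2: "integrable (XM d k rad) (\<lambda>X. (quad_form d k g X)^2)"
    unfolding integrable_iff_bounded using fin by simp
  have intQ: "integrable (XM d k rad) (quad_form d k g)" by (rule XM_quad_int(1))
  have EQ: "(\<integral>X. quad_form d k g X \<partial>XM d k rad) = traceA d k g" by (rule XM_quad_int(2))
  show veq: "var_of (XM d k rad) (quad_form d k g) = (\<integral>X. (quad_form d k g X - traceA d k g)^2 \<partial>XM d k rad)"
    unfolding var_of_def EQ ..
  have EQ2: "(\<integral>X. (quad_form d k g X)^2 \<partial>XM d k rad) \<le> B"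
  proof -
    have "(\<integral>X. (quad_form d k g X)^2 \<partial>XM d k rad) = enn2real (Fq d k rad g)"
      unfolding Fq_def by (rule integral_eq_nn_integral) auto
    also have "\<dots> \<le> B" by (rule enn2real_leI[OF Bnn F])
    finally show ?thesis .
  qed
  have "var_of (XM d k rad) (quad_form d k g) = (\<integral>X. (quad_form d k g X)^2 \<partial>XM d k rad) - (traceA d k g)^2"
    using X.variance_eq[OF intQ int2] unfolding var_of_def EQ .
  also have "\<dots> \<le> B" using EQ2 zero_le_power2[of "traceA d k g"] by linarith
  finally have vB: "var_of (XM d k rad) (quad_form d k g) \<le> B" .
  define N where "N = real (d ^ k)"
  have Npos: "0 < N" using d by (simp add: N_def)
  show Spos: "0 < traceA d k g" using S \<delta>0_pos Npos unfolding N_def[symmetric] by (smt (verit) mult_pos_pos)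
  have "(\<delta>0 * N)^2 \<le> (traceA d k g)^2"
    using S \<delta>0_pos Npos unfolding N_def[symmetric] by (intro power_mono) auto
  then have N2: "N^2 \<le> (traceA d k g)^2 / \<delta>0^2"
    using \<delta>0_pos by (simp add: power_mult_distrib field_simps)
  have dd: "real d ^ 2 + 2 * real d = real d ^ 2 * (1 + 2 / real d)"
    using d by (simp add: field_simps power2_eq_square)
  have rho: "(1 + 2 / real d) ^ k \<le> (2 + 1 / real d) ^ k"
    using d by (intro power_mono) (auto simp: field_simps)
  have "B = 36 * N^2 * (1 + 2 / real d) ^ k"
    unfolding B dd N_def by (simp add: power_mult_distrib power_mult[symmetric] mult.commute[of 2 k])
  also have "\<dots> \<le> 36 * ((traceA d k g)^2 / \<delta>0^2) * (2 + 1 / real d) ^ k"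
    by (intro mult_mono N2 rho mult_left_mono) auto
  also have "\<dots> = C0 * (2 + 1 / real d) ^ k * (traceA d k g)^2"
    by (simp add: C0_def)
  finally show "var_of (XM d k rad) (quad_form d k g) \<le> C0 * (2 + 1 / real d) ^ k * (traceA d k g)^2"
    using vB by simp
qed

lemma good_set:
  fixes d k :: nat and rad :: "nat \<Rightarrow> bool"
  assumes d: "1 \<le> d"
  defines "B \<equiv> 36 * (real d ^ 2 + 2 * real d) ^ k"
  defines "Good \<equiv> {g \<in> space (GV (kron_index d k)). Fq d k rad g \<le> ennreal B \<and> \<delta>0 * real (d ^ k) \<le> traceA d k g}"
  shows "Good \<in> sets (GV (kron_index d k))"
    and "emeasure (GV (kron_index d k)) (space (GV (kron_index d k)) - Good) \<le> ennreal (1/6)"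
proof -
  let ?G = "GV (kron_index d k)"
  interpret Gp: prob_space ?G by (rule prob_GV)
  have [measurable]: "Fq d k rad \<in> borel_measurable ?G" by (rule Fq_meas)
  have [measurable]: "(\<lambda>g. traceA d k g) \<in> borel_measurable ?G" by (rule trace_meas)
  show Gm: "Good \<in> sets ?G" unfolding Good_def by measurable
  define A1 where "A1 = {g\<in>space ?G. ennreal B < Fq d k rad g}"
  define A2 where "A2 = {g\<in>space ?G. (\<Sum>i\<in>kron_index d k. (g i)^2) < \<delta>0 * card (kron_index d k)}"
  have A1m: "A1 \<in> sets ?G" unfolding A1_def by measurable
  have A2m: "A2 \<in> sets ?G" unfolding A2_def using GV_S_meas[of "kron_index d k"] by measurable
  have "space ?G - Good \<subseteq> A1 \<union> A2"
    unfolding Good_def A1_def A2_def by (auto simp: kron_index_card traceA_eq not_le)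
  then have "emeasure ?G (space ?G - Good) \<le> emeasure ?G (A1 \<union> A2)"
    using A1m A2m by (intro emeasure_mono) auto
  also have "\<dots> \<le> emeasure ?G A1 + emeasure ?G A2" by (rule emeasure_subadditive[OF A1m A2m])
  also have "emeasure ?G A1 \<le> ennreal (1/12)"
    unfolding A1_def by (rule Fq_markov[OF _ d]) (simp add: B_def)
  also have "emeasure ?G A2 \<le> ennreal (1/12)"
  proof -
    have ne: "kron_index d k \<noteq> {}" using d kron_index_card[of d k] by (metis card.empty power_not_zero not_one_le_zero)
    show ?thesis unfolding A2_def by (rule GV_lower_tail[OF kron_index_finite ne])
  qed
  also have "ennreal (1/12) + ennreal (1/12) = ennreal (1/6)" by (simp flip: ennreal_plus)
  finally show "emeasure ?G (space ?G - Good) \<le> ennreal (1/6)" by (simp add: add_mono)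
qed

lemma good_measure:
  fixes d k :: nat and rad :: "nat \<Rightarrow> bool"
  assumes d: "1 \<le> d"
  defines "Good \<equiv> {g \<in> space (GV (kron_index d k)). Fq d k rad g \<le> ennreal (36 * (real d ^ 2 + 2 * real d) ^ k) \<and> \<delta>0 * real (d ^ k) \<le> traceA d k g}"
  shows "measure (GV (kron_index d k)) Good \<ge> 5/6"
proof -
  let ?G = "GV (kron_index d k)"
  interpret Gp: prob_space ?G by (rule prob_GV)
  have Gm: "Good \<in> sets ?G" unfolding Good_def by (rule good_set(1)[OF d])
  have "emeasure ?G (space ?G - Good) \<le> ennreal (1/6)" unfolding Good_def by (rule good_set(2)[OF d])
  then have "measure ?G (space ?G - Good) \<le> 1/6" by (simp add: Gp.emeasure_eq_measure)
  then show ?thesis using Gp.prob_compl[OF Gm] by simp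
qed

lemma var_eq_all: "var_of (XM d k rad) (quad_form d k g) = (\<integral>X. (quad_form d k g X - traceA d k g)^2 \<partial>XM d k rad)"
  unfolding var_of_def XM_quad_int(2) ..

lemma var_meas: "(\<lambda>g. var_of (XM d k rad) (quad_form d k g)) \<in> borel_measurable (GV (kron_index d k))"
proof -
  interpret X: prob_space "XM d k rad" by (rule prob_XM)
  have m1: "(\<lambda>p. quad_form d k (fst p) (snd p)) \<in> borel_measurable (GV (kron_index d k) \<Otimes>\<^sub>M XM d k rad)" by (rule quad_meas)
  have m2: "(\<lambda>p. traceA d k (fst p)) \<in> borel_measurable (GV (kron_index d k) \<Otimes>\<^sub>M XM d k rad)"
    by (rule measurable_compose[OF measurable_fst trace_meas])
  have "(\<lambda>p. (quad_form d k (fst p) (snd p) - traceA d k (fst p))^2) \<in> borel_measurable (GV (kron_index d k) \<Otimes>\<^sub>M XM d k rad)"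
    using m1 m2 by measurable
  then have "case_prod (\<lambda>g X. (quad_form d k g X - traceA d k g)^2) \<in> borel_measurable (GV (kron_index d k) \<Otimes>\<^sub>M XM d k rad)"
    by (simp add: case_prod_unfold)
  from X.borel_measurable_lebesgue_integral[OF this]
  show ?thesis unfolding var_eq_all .
qed

lemma part1:
  fixes d k :: nat and rad :: "nat \<Rightarrow> bool"
  assumes d: "1 \<le> d" and C: "C0 \<le> C"
  shows "measure (GV (kron_index d k)) {g \<in> space (GV (kron_index d k)).
           var_of (XM d k rad) (quad_form d k g) \<le> C * (2 + 1 / real d) ^ k * (traceA d k g)\<^sup>2} \<ge> 3/4"
proof -
  let ?G = "GV (kron_index d k)"
  interpret Gp: prob_space ?G by (rule prob_GV)
  define Good where "Good = {g \<in> space ?G. Fq d k rad g \<le> ennreal (36 * (real d ^ 2 + 2 * real d) ^ k) \<and> \<delta>0 * real (d ^ k) \<le> traceA d k g}"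
  let ?S = "{g \<in> space ?G. var_of (XM d k rad) (quad_form d k g) \<le> C * (2 + 1 / real d) ^ k * (traceA d k g)\<^sup>2}"
  have [measurable]: "(\<lambda>g. var_of (XM d k rad) (quad_form d k g)) \<in> borel_measurable ?G" by (rule var_meas)
  have [measurable]: "(\<lambda>g. traceA d k g) \<in> borel_measurable ?G" by (rule trace_meas)
  have Sm: "?S \<in> sets ?G" by measurable
  have sub: "Good \<subseteq> ?S"
  proof
    fix g assume "g \<in> Good"
    then have g: "g \<in> space ?G" "Fq d k rad g \<le> ennreal (36 * (real d ^ 2 + 2 * real d) ^ k)" "\<delta>0 * real (d ^ k) \<le> traceA d k g"
      by (auto simp: Good_def)
    have "var_of (XM d k rad) (quad_form d k g) \<le> C0 * (2 + 1 / real d) ^ k * (traceA d k g)\<^sup>2"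
      by (rule good_g(3)[OF d g(1) refl g(2) g(3)])
    also have "\<dots> \<le> C * (2 + 1 / real d) ^ k * (traceA d k g)\<^sup>2"
      using C by (intro mult_right_mono) auto
    finally show "g \<in> ?S" using g by simp
  qed
  have "5/6 \<le> measure ?G Good" unfolding Good_def by (rule good_measure[OF d])
  also have "\<dots> \<le> measure ?G ?S" by (rule Gp.finite_measure_mono[OF sub Sm])
  finally show ?thesis by simp
qed

lemma part2:
  fixes d k l :: nat and rad :: "nat \<Rightarrow> bool" and \<epsilon> :: real
  assumes d: "1 \<le> d" and C: "C = 6 * C0" and e: "0 < \<epsilon>" "\<epsilon> < 1"
    and l: "real l \<ge> C / \<epsilon>\<^sup>2 * (2 + 1 / real d) ^ k"
  shows "measure (GV (kron_index d k) \<Otimes>\<^sub>M PiM {..<l} (\<lambda>_. XM d k rad))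
             {(g, Xs) \<in> space (GV (kron_index d k) \<Otimes>\<^sub>M PiM {..<l} (\<lambda>_. XM d k rad)).
                (1 - \<epsilon>) * traceA d k g \<le> hutch d k l g Xs \<and>
                hutch d k l g Xs \<le> (1 + \<epsilon>) * traceA d k g} \<ge> 2 / 3"
proof -
  let ?G = "GV (kron_index d k)"
  let ?X = "XM d k rad"
  let ?P = "PiM {..<l} (\<lambda>_. ?X)"
  let ?\<Omega> = "?G \<Otimes>\<^sub>M ?P"
  let ?r = "(2 + 1 / real d) ^ k"
  interpret Gp: prob_space ?G by (rule prob_GV)
  have Pp: "prob_space ?P" by (rule prob_space_PiM) (rule prob_XM)
  interpret PXp: prob_space ?P by (rule Pp)
  interpret Op: prob_space ?\<Omega> by (rule prob_space_pair[OF prob_GV Pp])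
  have rpos: "0 < ?r" using d by (intro zero_less_power) (simp add: add_pos_nonneg)
  have Cpos: "0 < C" using C C0_pos by simp
  have lpos: "0 < real l"
    using l Cpos e rpos by (smt (verit) divide_pos_pos mult_pos_pos zero_less_power)
  have le2: "C * ?r \<le> real l * \<epsilon>^2"
    using l e by (simp add: field_simps)
  define cond where "cond g Xs \<longleftrightarrow> (1 - \<epsilon>) * traceA d k g \<le> hutch d k l g Xs \<and> hutch d k l g Xs \<le> (1 + \<epsilon>) * traceA d k g" for g Xs
  define Bad where "Bad = {p \<in> space ?\<Omega>. \<not> cond (fst p) (snd p)}"
  define Good where "Good = {g \<in> space ?G. Fq d k rad g \<le> ennreal (36 * (real d ^ 2 + 2 * real d) ^ k) \<and> \<delta>0 * real (d ^ k) \<le> traceA d k g}"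
  have Goodm: "Good \<in> sets ?G" unfolding Good_def by (rule good_set(1)[OF d])
  have Goodc: "emeasure ?G (space ?G - Good) \<le> ennreal (1/6)" unfolding Good_def by (rule good_set(2)[OF d])
  have pm: "(\<lambda>p. (fst p, snd p s)) \<in> measurable ?\<Omega> (?G \<Otimes>\<^sub>M ?X)" if "s < l" for s
  proof -
    have 1: "(\<lambda>Xs. Xs s) \<in> measurable ?P ?X" by (rule measurable_component_singleton) (use that in simp)
    show ?thesis by (intro measurable_Pair measurable_fst measurable_compose[OF measurable_snd 1])
  qed
  have qm: "(\<lambda>p. quad_form d k (fst p) (snd p s)) \<in> borel_measurable ?\<Omega>" if "s < l" for s
    using measurable_compose[OF pm[OF that] quad_meas] by simp
  have hm[measurable]: "(\<lambda>p. hutch d k l (fst p) (snd p)) \<in> borel_measurable ?\<Omega>"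
    unfolding hutch_def by (intro borel_measurable_times borel_measurable_const borel_measurable_sum qm) simp
  have tm[measurable]: "(\<lambda>p. traceA d k (fst p)) \<in> borel_measurable ?\<Omega>"
    by (rule measurable_compose[OF measurable_fst trace_meas])
  have Badm: "Bad \<in> sets ?\<Omega>" unfolding Bad_def cond_def by measurable
  have sec: "emeasure ?P (Pair g -` Bad) \<le> indicator (space ?G - Good) g + ennreal (1/6)" if gs: "g \<in> space ?G" for g
  proof (cases "g \<in> Good")
    case False
    have "emeasure ?P (Pair g -` Bad) \<le> 1" by (rule PXp.emeasure_le_1)
    then show ?thesis using False gs by (simp add: add_increasing2)
  next
    case True
    then have g: "Fq d k rad g \<le> ennreal (36 * (real d ^ 2 + 2 * real d) ^ k)" "\<delta>0 * real (d ^ k) \<le> traceA d k g"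
      by (auto simp: Good_def)
    note gg = good_g[OF d gs refl g(1) g(2)]
    define S where "S = traceA d k g"
    define V where "V = var_of ?X (quad_form d k g)"
    have Spos: "0 < S" using gg(4) by (simp add: S_def)
    have VS: "V \<le> C0 * ?r * S^2" using gg(3) by (simp add: V_def S_def)
    have "Pair g -` Bad \<subseteq> {Xs \<in> space ?P. \<epsilon> * S \<le> \<bar>(1 / real l) * (\<Sum>s<l. quad_form d k g (Xs s)) - S\<bar>}"
    proof
      fix Xs assume "Xs \<in> Pair g -` Bad"
      then have Xs: "Xs \<in> space ?P" "\<not> cond g Xs" by (auto simp: Bad_def space_pair_measure)
      have "\<epsilon> * S \<le> \<bar>hutch d k l g Xs - S\<bar>"
        using Xs(2) unfolding cond_def S_def by (auto simp: algebra_simps abs_if)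
      then show "Xs \<in> {Xs \<in> space ?P. \<epsilon> * S \<le> \<bar>(1 / real l) * (\<Sum>s<l. quad_form d k g (Xs s)) - S\<bar>}"
        using Xs(1) by (simp add: hutch_def)
    qed
    then have "emeasure ?P (Pair g -` Bad) \<le> emeasure ?P {Xs \<in> space ?P. \<epsilon> * S \<le> \<bar>(1 / real l) * (\<Sum>s<l. quad_form d k g (Xs s)) - S\<bar>}"
    proof (rule emeasure_mono)
      have qs: "(\<lambda>Xs. quad_form d k g (Xs s)) \<in> borel_measurable ?P" if "s < l" for s
      proof -
        have 1: "(\<lambda>Xs. Xs s) \<in> measurable ?P ?X" by (rule measurable_component_singleton) (use that in simp)
        show ?thesis by (rule measurable_compose[OF 1 quad_meas_g[OF gs]])
      qed
      have [measurable]: "(\<lambda>Xs. (1 / real l) * (\<Sum>s<l. quad_form d k g (Xs s))) \<in> borel_measurable ?P"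
        by (intro borel_measurable_times borel_measurable_const borel_measurable_sum qs) simp
      show "{Xs \<in> space ?P. \<epsilon> * S \<le> \<bar>(1 / real l) * (\<Sum>s<l. quad_form d k g (Xs s)) - S\<bar>} \<in> sets ?P"
        by measurable
    qed
    also have "\<dots> \<le> ennreal (V / (real l * (\<epsilon> * S)^2))"
    proof (rule avg_cheb[OF prob_XM quad_meas_g[OF gs] gg(1)])
      show "(\<integral>X. quad_form d k g X \<partial>?X) = S" unfolding S_def by (rule XM_quad_int(2))
      show "(\<integral>X. (quad_form d k g X - S)^2 \<partial>?X) = V" unfolding V_def S_def by (rule gg(2)[symmetric])
      show "0 < l" using lpos by simp
      show "0 < \<epsilon> * S" using e Spos by simp
    qed
    also have "\<dots> \<le> ennreal (1/6)"
    proof (rule ennreal_leI)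
      have "6 * V \<le> C * ?r * S^2" using VS C by simp
      also have "\<dots> \<le> real l * \<epsilon>^2 * S^2" using le2 Spos by (intro mult_right_mono) auto
      finally have "6 * V \<le> real l * (\<epsilon> * S)^2" by (simp add: power_mult_distrib)
      moreover have "0 < real l * (\<epsilon> * S)^2" using lpos e Spos by simp
      ultimately show "V / (real l * (\<epsilon> * S)^2) \<le> 1/6" by (simp add: divide_le_eq)
    qed
    finally show ?thesis by (simp add: add_increasing)
  qed
  have "emeasure ?\<Omega> Bad = (\<integral>\<^sup>+g. emeasure ?P (Pair g -` Bad) \<partial>?G)"
    by (rule PXp.emeasure_pair_measure_alt[OF Badm])
  also have "\<dots> \<le> (\<integral>\<^sup>+g. indicator (space ?G - Good) g + ennreal (1/6) \<partial>?G)"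
    by (rule nn_integral_mono) (rule sec)
  also have "\<dots> = emeasure ?G (space ?G - Good) + ennreal (1/6)"
    using Goodm by (subst nn_integral_add) (auto simp: Gp.emeasure_space_1)
  also have "\<dots> \<le> ennreal (1/6) + ennreal (1/6)" using Goodc by (rule add_right_mono)
  also have "\<dots> = ennreal (1/3)" by (simp flip: ennreal_plus)
  finally have "measure ?\<Omega> Bad \<le> 1/3" by (simp add: Op.emeasure_eq_measure)
  moreover have "{(g, Xs) \<in> space ?\<Omega>. (1 - \<epsilon>) * traceA d k g \<le> hutch d k l g Xs \<and> hutch d k l g Xs \<le> (1 + \<epsilon>) * traceA d k g}
      = space ?\<Omega> - Bad"
    unfolding Bad_def cond_def by auto
  ultimately show ?thesis using Op.prob_compl[OF Badm] by simp
qed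

theorem theorem3:
  shows "\<exists>C::real. C > 0 \<and>
    (\<forall>(d::nat) (k::nat) (rad::nat \<Rightarrow> bool). d \<ge> 1 \<longrightarrow>
      measure (gauss_vec d k)
        {g \<in> space (gauss_vec d k).
           var_of (query_dist d k rad) (quad_form d k g)
             \<le> C * (2 + 1 / real d) ^ k * (traceA d k g)\<^sup>2} \<ge> 3 / 4
      \<and> (\<forall>(\<epsilon>::real) (l::nat). 0 < \<epsilon> \<and> \<epsilon> < 1 \<and> real l \<ge> C / \<epsilon>\<^sup>2 * (2 + 1 / real d) ^ k \<longrightarrow>
           measure (gauss_vec d k \<Otimes>\<^sub>M PiM {..<l} (\<lambda>_. query_dist d k rad))
             {(g, Xs) \<in> space (gauss_vec d k \<Otimes>\<^sub>M PiM {..<l} (\<lambda>_. query_dist d k rad)).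
                (1 - \<epsilon>) * traceA d k g \<le> hutch d k l g Xs \<and>
                hutch d k l g Xs \<le> (1 + \<epsilon>) * traceA d k g} \<ge> 2 / 3))"
proof (rule exI[of _ "6 * C0"], intro conjI allI impI)
  show "6 * C0 > 0" using C0_pos by simp
next
  fix d k :: nat and rad :: "nat \<Rightarrow> bool"
  assume d: "d \<ge> 1"
  have "C0 \<le> 6 * C0" using C0_pos by simp
  from part1[OF d this, of k rad]
  show "measure (gauss_vec d k)
        {g \<in> space (gauss_vec d k).
           var_of (query_dist d k rad) (quad_form d k g)
             \<le> (6 * C0) * (2 + 1 / real d) ^ k * (traceA d k g)\<^sup>2} \<ge> 3 / 4"
    by (simp only: gauss_vec_def query_dist_eq)
next
  fix d k :: nat and rad :: "nat \<Rightarrow> bool" and \<epsilon> :: real and l :: nat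
  assume d: "d \<ge> 1" and H: "0 < \<epsilon> \<and> \<epsilon> < 1 \<and> real l \<ge> (6 * C0) / \<epsilon>\<^sup>2 * (2 + 1 / real d) ^ k"
  from H have h1: "0 < \<epsilon>" and h2: "\<epsilon> < 1" and h3: "real l \<ge> (6 * C0) / \<epsilon>\<^sup>2 * (2 + 1 / real d) ^ k" by auto
  from part2[OF d refl h1 h2 h3]
  show "measure (gauss_vec d k \<Otimes>\<^sub>M PiM {..<l} (\<lambda>_. query_dist d k rad))
             {(g, Xs) \<in> space (gauss_vec d k \<Otimes>\<^sub>M PiM {..<l} (\<lambda>_. query_dist d k rad)).
                (1 - \<epsilon>) * traceA d k g \<le> hutch d k l g Xs \<and>
                hutch d k l g Xs \<le> (1 + \<epsilon>) * traceA d k g} \<ge> 2 / 3"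
    by (simp only: gauss_vec_def query_dist_eq)
qed

end
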